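(* A Burling graph contains no triangle.
   Context: Graphs are finite, without loops or multiple edges. In a rooted tree $T$ with root $r$, each non-root vertex $v$ has a parent $p(v)$; children, leaves, ancestors and descendants are as usual. A branch is a sequence $v_1\dots v_k$ ($k\ge0$) with $v_i$ the parent of $v_{i+1}$; it starts at $v_1$. A Burling tree is a 4-tuple $(T,r,\ell,c)$: $T$ a rooted tree with root $r$; $\ell$ assigns to each non-leaf vertex $v$ one of its children $\ell(v)$ (the last-born of $v$); $c$ assigns to every vertex $v$ that is neither the root nor a last-born the vertex-set of a (possibly empty) branch starting at $\ell(p(v))$, and $c(v)=\emptyset$ if $v$ is the root or a last-born. The oriented graph fully derived from it has vertex-set $V(T)$ and an arc $uv$ iff $v\in c(u)$. A (non-oriented) graph is a Burling graph if it is isomorphic to an induced subgraph of the underlying graph of the oriented graph fully derived from some Burling tree. A triangle is a set of three pairwise adjacent vertices. *)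

theory Defs
  imports Main
begin

text \<open>Rooted tree on a finite vertex set V with root r and parent function p
  (p is only meaningful on V - {r}); every vertex reaches the root by iterating p.\<close>
definition rooted_tree :: "'v set \<Rightarrow> 'v \<Rightarrow> ('v \<Rightarrow> 'v) \<Rightarrow> bool" where
  "rooted_tree V r p \<longleftrightarrow> finite V \<and> r \<in> V \<and> (\<forall>v \<in> V - {r}. p v \<in> V)
     \<and> (\<forall>v \<in> V. \<exists>n. (p ^^ n) v = r)"

definition children :: "'v set \<Rightarrow> 'v \<Rightarrow> ('v \<Rightarrow> 'v) \<Rightarrow> 'v \<Rightarrow> 'v set" where
  "children V r p u = {v \<in> V - {r}. p v = u}"

definition is_branch :: "'v set \<Rightarrow> 'v \<Rightarrow> ('v \<Rightarrow> 'v) \<Rightarrow> 'v list \<Rightarrow> bool" where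
  "is_branch V r p xs \<longleftrightarrow> set xs \<subseteq> V \<and>
     (\<forall>i. Suc i < length xs \<longrightarrow> xs ! Suc i \<noteq> r \<and> p (xs ! Suc i) = xs ! i)"

definition branch_starting_at :: "'v set \<Rightarrow> 'v \<Rightarrow> ('v \<Rightarrow> 'v) \<Rightarrow> 'v \<Rightarrow> 'v list \<Rightarrow> bool" where
  "branch_starting_at V r p a xs \<longleftrightarrow> is_branch V r p xs \<and> (xs = [] \<or> hd xs = a)"

definition burling_tree ::
  "'v set \<Rightarrow> 'v \<Rightarrow> ('v \<Rightarrow> 'v) \<Rightarrow> ('v \<Rightarrow> 'v) \<Rightarrow> ('v \<Rightarrow> 'v set) \<Rightarrow> bool" where
  "burling_tree V r p l c \<longleftrightarrow> rooted_tree V r p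
     \<and> (\<forall>v \<in> V. children V r p v \<noteq> {} \<longrightarrow> l v \<in> children V r p v)
     \<and> (\<forall>v \<in> V. (v = r \<or> l (p v) = v) \<longrightarrow> c v = {})
     \<and> (\<forall>v \<in> V - {r}. l (p v) \<noteq> v \<longrightarrow>
          (\<exists>xs. branch_starting_at V r p (l (p v)) xs \<and> c v = set xs))"

definition derived_arc :: "'v set \<Rightarrow> ('v \<Rightarrow> 'v set) \<Rightarrow> 'v \<Rightarrow> 'v \<Rightarrow> bool" where
  "derived_arc V c u v \<longleftrightarrow> u \<in> V \<and> v \<in> V \<and> v \<in> c u"

definition simple_graph :: "'b set \<Rightarrow> ('b \<Rightarrow> 'b \<Rightarrow> bool) \<Rightarrow> bool" where
  "simple_graph W E \<longleftrightarrow> finite W \<and> (\<forall>x y. E x y \<longrightarrow> x \<in> W \<and> y \<in> W)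
     \<and> (\<forall>x y. E x y \<longrightarrow> E y x) \<and> (\<forall>x. \<not> E x x)"

text \<open>Burling graph: isomorphic to an induced subgraph of the underlying graph of the
  oriented graph fully derived from some Burling tree (tree vertices labelled by nat,
  which is no loss of generality since trees are finite).\<close>
definition burling_graph :: "'b set \<Rightarrow> ('b \<Rightarrow> 'b \<Rightarrow> bool) \<Rightarrow> bool" where
  "burling_graph W E \<longleftrightarrow> simple_graph W E \<and>
     (\<exists>(V::nat set) r p l c f. burling_tree V r p l c \<and> inj_on f W \<and> f ` W \<subseteq> V \<and>
        (\<forall>x \<in> W. \<forall>y \<in> W. E x y \<longleftrightarrow> (derived_arc V c (f x) (f y) \<or> derived_arc V c (f y) (f x))))"

definition has_triangle :: "'b set \<Rightarrow> ('b \<Rightarrow> 'b \<Rightarrow> bool) \<Rightarrow> bool" where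
  "has_triangle W E \<longleftrightarrow> (\<exists>x \<in> W. \<exists>y \<in> W. \<exists>z \<in> W. x \<noteq> y \<and> y \<noteq> z \<and> x \<noteq> z
     \<and> E x y \<and> E y z \<and> E x z)"

end

theory Submission
  imports Defs
begin

definition dep :: "('v \<Rightarrow> 'v) \<Rightarrow> 'v \<Rightarrow> 'v \<Rightarrow> nat" where
  "dep p r v = (LEAST n. (p ^^ n) v = r)"

lemma dep_step:
  assumes T: "rooted_tree V r p" and v: "v \<in> V" "v \<noteq> r"
  shows "dep p r v = Suc (dep p r (p v))"
proof -
  obtain n where n: "(p ^^ n) v = r" using T v unfolding rooted_tree_def by blast
  define m where "m = dep p r v"
  have m: "(p ^^ m) v = r" unfolding m_def dep_def by (rule LeastI[of _ n], rule n)
  have "m \<noteq> 0"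
  proof
    assume "m = 0"
    with m v show False by simp
  qed
  then obtain m' where m': "m = Suc m'" by (cases m) auto
  have pm: "(p ^^ m') (p v) = r" using m m' by (simp add: funpow_Suc_right del: funpow.simps)
  have le1: "dep p r (p v) \<le> m'" unfolding dep_def by (rule Least_le, rule pm)
  have "(p ^^ dep p r (p v)) (p v) = r" unfolding dep_def by (rule LeastI[of _ m'], rule pm)
  hence "(p ^^ Suc (dep p r (p v))) v = r" by (simp add: funpow_Suc_right del: funpow.simps)
  hence "m \<le> Suc (dep p r (p v))" unfolding m_def dep_def by (rule Least_le)
  with le1 m' show ?thesis unfolding m_def by simp
qed

lemma branch_dep:
  assumes T: "rooted_tree V r p" and B: "is_branch V r p xs"
  shows "i + d < length xs \<Longrightarrow> (p ^^ d) (xs ! (i + d)) = xs ! i \<and> dep p r (xs ! (i + d)) = dep p r (xs ! i) + d"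
proof (induction d)
  case 0
  then show ?case by simp
next
  case (Suc d)
  have a: "xs ! Suc (i + d) \<noteq> r" "p (xs ! Suc (i + d)) = xs ! (i + d)"
    using B Suc.prems unfolding is_branch_def by auto
  have inV: "xs ! Suc (i + d) \<in> V" using B Suc.prems unfolding is_branch_def by auto
  have IH: "(p ^^ d) (xs ! (i + d)) = xs ! i \<and> dep p r (xs ! (i + d)) = dep p r (xs ! i) + d"
    using Suc by simp
  have "(p ^^ Suc d) (xs ! (i + Suc d)) = (p ^^ d) (p (xs ! Suc (i + d)))"
    by (simp add: funpow_Suc_right del: funpow.simps)
  also have "\<dots> = xs ! i" using a IH by simp
  finally show ?case using dep_step[OF T inV a(1)] a IH by simp
qed

lemma chain:
  assumes T: "rooted_tree V r p" and B: "is_branch V r p xs"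
    and y: "y \<in> set xs" and z: "z \<in> set xs" and yz: "y \<noteq> z"
  shows "\<exists>k>0. ((p ^^ k) z = y \<and> dep p r z = dep p r y + k) \<or> ((p ^^ k) y = z \<and> dep p r y = dep p r z + k)"
proof -
  obtain i where i: "i < length xs" "y = xs ! i" using y by (auto simp: in_set_conv_nth)
  obtain j where j: "j < length xs" "z = xs ! j" using z by (auto simp: in_set_conv_nth)
  have "i \<noteq> j" using i j yz by auto
  show ?thesis
  proof (cases "i < j")
    case True
    have len: "i + (j - i) < length xs" using True j by simp
    have e: "i + (j - i) = j" using True by simp
    from branch_dep[OF T B len]
    have "(p ^^ (j - i)) z = y \<and> dep p r z = dep p r y + (j - i)" unfolding e i(2) j(2) .
    then show ?thesis using True by (intro exI[of _ "j - i"] conjI disjI1) simp_all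
  next
    case False
    hence "j < i" using \<open>i \<noteq> j\<close> by simp
    have len: "j + (i - j) < length xs" using \<open>j < i\<close> i by simp
    have e: "j + (i - j) = i" using \<open>j < i\<close> by simp
    from branch_dep[OF T B len]
    have "(p ^^ (i - j)) y = z \<and> dep p r y = dep p r z + (i - j)" unfolding e i(2) j(2) .
    then show ?thesis using \<open>j < i\<close> by (intro exI[of _ "i - j"] conjI disjI2) simp_all
  qed
qed

lemma arc_facts:
  assumes BT: "burling_tree V r p l c" and u: "u \<in> V" and v: "v \<in> c u"
  shows "u \<in> V - {r} \<and> l (p u) \<noteq> u \<and> p (l (p u)) = p u \<and> dep p r (l (p u)) = dep p r u
     \<and> (\<exists>j. (p ^^ j) v = l (p u) \<and> dep p r v = dep p r u + j)
     \<and> (\<exists>xs. branch_starting_at V r p (l (p u)) xs \<and> c u = set xs)"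
proof -
  have T: "rooted_tree V r p"
    and L: "\<forall>v \<in> V. children V r p v \<noteq> {} \<longrightarrow> l v \<in> children V r p v"
    and C0: "\<forall>v \<in> V. (v = r \<or> l (p v) = v) \<longrightarrow> c v = {}"
    and C1: "\<forall>v \<in> V - {r}. l (p v) \<noteq> v \<longrightarrow>
          (\<exists>xs. branch_starting_at V r p (l (p v)) xs \<and> c v = set xs)"
    using BT unfolding burling_tree_def by blast+
  have ur: "u \<noteq> r" and lu: "l (p u) \<noteq> u" using C0 u v by auto
  obtain xs where xs: "branch_starting_at V r p (l (p u)) xs" "c u = set xs"
    using C1 u ur lu by blast
  have pu: "p u \<in> V" using T u ur unfolding rooted_tree_def by blast
  have "u \<in> children V r p (p u)" using u ur unfolding children_def by auto
  hence "children V r p (p u) \<noteq> {}" by blast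
  hence lc: "l (p u) \<in> children V r p (p u)" using L pu by blast
  have s: "l (p u) \<in> V" "l (p u) \<noteq> r" "p (l (p u)) = p u"
    using lc unfolding children_def by simp_all
  have ds: "dep p r (l (p u)) = dep p r u"
    unfolding dep_step[OF T s(1,2)] dep_step[OF T u ur] s(3) ..
  have ne: "xs \<noteq> []" using v xs by auto
  hence h: "xs ! 0 = l (p u)" using xs unfolding branch_starting_at_def by (simp add: hd_conv_nth)
  have B: "is_branch V r p xs" using xs unfolding branch_starting_at_def by blast
  obtain j where j: "j < length xs" "v = xs ! j" using v xs by (auto simp: in_set_conv_nth)
  have len: "0 + j < length xs" using j by simp
  have "(p ^^ j) v = l (p u) \<and> dep p r v = dep p r u + j"
    using branch_dep[OF T B len] unfolding h ds j(2) by simp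
  then show ?thesis using u ur lu s ds xs by blast
qed

lemma not_anc:
  assumes BT: "burling_tree V r p l c" and u: "u \<in> V" and v: "v \<in> c u"
    and k: "(p ^^ k) v = u" "dep p r v = dep p r u + k"
  shows False
proof -
  have A: "l (p u) \<noteq> u" "\<exists>j. (p ^^ j) v = l (p u) \<and> dep p r v = dep p r u + j"
    using arc_facts[OF BT u v] by blast+
  then obtain j where j: "(p ^^ j) v = l (p u)" "dep p r v = dep p r u + j" by blast
  have "j = k" using j(2) k(2) by linarith
  then show False using j(1) k(1) A(1) by simp
qed

lemma arc_dep:
  assumes BT: "burling_tree V r p l c" and u: "u \<in> V" and v: "v \<in> c u"
  shows "dep p r u \<le> dep p r v"
proof -
  have "\<exists>j. (p ^^ j) v = l (p u) \<and> dep p r v = dep p r u + j"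
    using arc_facts[OF BT u v] by blast
  then show ?thesis by auto
qed

lemma out2:
  assumes BT: "burling_tree V r p l c" and x: "x \<in> V" and y: "y \<in> V" and z: "z \<in> V"
    and xy: "y \<in> c x" and xz: "z \<in> c x" and yz: "y \<noteq> z" and e: "z \<in> c y \<or> y \<in> c z"
  shows False
proof -
  have T: "rooted_tree V r p" using BT unfolding burling_tree_def by blast
  obtain xs where xs: "branch_starting_at V r p (l (p x)) xs" "c x = set xs"
    using arc_facts[OF BT x xy] by blast
  have B: "is_branch V r p xs" using xs unfolding branch_starting_at_def by blast
  obtain k where k: "k > 0" "((p ^^ k) z = y \<and> dep p r z = dep p r y + k) \<or> ((p ^^ k) y = z \<and> dep p r y = dep p r z + k)"
    using chain[OF T B _ _ yz] xy xz xs by auto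
  from k(2) show False
  proof
    assume h: "(p ^^ k) z = y \<and> dep p r z = dep p r y + k"
    from e show False
    proof
      assume "z \<in> c y" then show False using not_anc[OF BT y _ , of z k] h by blast
    next
      assume "y \<in> c z" then have "dep p r z \<le> dep p r y" by (rule arc_dep[OF BT z])
      then show False using h k(1) by linarith
    qed
  next
    assume h: "(p ^^ k) y = z \<and> dep p r y = dep p r z + k"
    from e show False
    proof
      assume "y \<in> c z" then show False using not_anc[OF BT z _ , of y k] h by blast
    next
      assume "z \<in> c y" then have "dep p r y \<le> dep p r z" by (rule arc_dep[OF BT y])
      then show False using h k(1) by linarith
    qed
  qed
qed

lemma cyc:
  assumes BT: "burling_tree V r p l c" and x: "x \<in> V" and y: "y \<in> V" and z: "z \<in> V"
    and xy: "y \<in> c x" and yz: "z \<in> c y" and zx: "x \<in> c z" and ne: "y \<noteq> z"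
  shows False
proof -
  have d: "dep p r x = dep p r y" "dep p r y = dep p r z"
    using arc_dep[OF BT x xy] arc_dep[OF BT y yz] arc_dep[OF BT z zx] by linarith+
  obtain j1 where j1: "(p ^^ j1) y = l (p x)" "dep p r y = dep p r x + j1"
    using arc_facts[OF BT x xy] by blast
  obtain j2 where j2: "(p ^^ j2) z = l (p y)" "dep p r z = dep p r y + j2"
    using arc_facts[OF BT y yz] by blast
  have "j1 = 0" "j2 = 0" using d j1(2) j2(2) by linarith+
  hence e1: "y = l (p x)" and e2: "z = l (p y)" using j1(1) j2(1) by simp_all
  have "p (l (p x)) = p x" using arc_facts[OF BT x xy] by blast
  hence "p y = p x" unfolding e1[symmetric] .
  hence "z = y" using e1 e2 by metis
  with ne show False by simp
qed

theorem lemma3p4: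
  fixes W :: "'b set" and E :: "'b \<Rightarrow> 'b \<Rightarrow> bool"
  assumes "burling_graph W E"
  shows "\<not> has_triangle W E"
proof
  assume "has_triangle W E"
  then obtain x y z where t: "x \<in> W" "y \<in> W" "z \<in> W" "x \<noteq> y" "y \<noteq> z" "x \<noteq> z"
    "E x y" "E y z" "E x z" unfolding has_triangle_def by blast
  have "\<exists>(V::nat set) r p l c f. burling_tree V r p l c \<and> inj_on f W \<and> f ` W \<subseteq> V \<and>
        (\<forall>x \<in> W. \<forall>y \<in> W. E x y \<longleftrightarrow> (derived_arc V c (f x) (f y) \<or> derived_arc V c (f y) (f x)))"
    using assms unfolding burling_graph_def by (rule conjunct2)
  then obtain V :: "nat set" and r p l c f where BT: "burling_tree V r p l c" and inj: "inj_on f W"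
    and sub: "f ` W \<subseteq> V"
    and EE: "\<forall>x \<in> W. \<forall>y \<in> W. E x y \<longleftrightarrow> (derived_arc V c (f x) (f y) \<or> derived_arc V c (f y) (f x))"
    by (elim exE conjE)
  define a where "a = f x"
  define b where "b = f y"
  define d where "d = f z"
  have V: "a \<in> V" "b \<in> V" "d \<in> V" using sub t unfolding a_def b_def d_def by auto
  have D: "a \<noteq> b" "b \<noteq> d" "a \<noteq> d" using inj t unfolding a_def b_def d_def inj_on_def by metis+
  have e1: "b \<in> c a \<or> a \<in> c b" using EE t unfolding a_def b_def derived_arc_def by blast
  have e2: "d \<in> c b \<or> b \<in> c d" using EE t unfolding d_def b_def derived_arc_def by blast
  have e3: "d \<in> c a \<or> a \<in> c d" using EE t unfolding a_def d_def derived_arc_def by blast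
  note o1 = out2[OF BT V(1) V(2) V(3)] and o2 = out2[OF BT V(2) V(1) V(3)]
    and o3 = out2[OF BT V(3) V(1) V(2)]
    and c1 = cyc[OF BT V(1) V(2) V(3)] and c2 = cyc[OF BT V(1) V(3) V(2)]
  show False
  proof (cases "b \<in> c a")
    case True
    then show False
    proof (cases "d \<in> c a")
      case True
      then show False using o1 \<open>b \<in> c a\<close> D e2 by blast
    next
      case False
      then have "a \<in> c d" using e3 by blast
      then show False using e2 o3 c1 D \<open>b \<in> c a\<close> by blast
    qed
  next
    case False
    then have ab: "a \<in> c b" using e1 by blast
    then show False
    proof (cases "d \<in> c a")
      case True
      then show False using e2 o2 c2 D ab by blast
    next
      case False
      then have "a \<in> c d" using e3 by blast
      then show False using e2 o2 o3 D ab by blast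
    qed
  qed
qed

end
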